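(* Let $p\in S_m$ avoid the pattern $321$. Then for every $n\ge 2$ there are only finitely many $\omega\in\widetilde{S}_n$ that avoid $p$.
   Context: For $n\ge 2$, the affine symmetric group $\widetilde{S}_n$ is the set of bijections $\omega:\mathbb{Z}\to\mathbb{Z}$ such that $\omega(i+n)=\omega(i)+n$ for all $i\in\mathbb{Z}$ and $\sum_{i=1}^n\omega(i)=\binom{n+1}{2}$; write $\omega_i=\omega(i)$. For $p\in S_k$, $\omega$ contains $p$ if there exist integers $i_1<\cdots<i_k$ such that $\omega_{i_1}\cdots\omega_{i_k}$ has the same relative order as $p_1\cdots p_k$; otherwise $\omega$ avoids $p$. Containment between ordinary permutations is defined the same way. *)

theory Defs
  imports "HOL-Combinatorics.Permutations"
begin

text \<open>A permutation p in S_k is represented as a function nat => nat with p permutes {1..k};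
  the word p_1 ... p_k is p 1, ..., p k.\<close>

definition contains_pattern :: "('a::linorder \<Rightarrow> 'b::linorder) \<Rightarrow> (nat \<Rightarrow> nat) \<Rightarrow> nat \<Rightarrow> bool" where
  "contains_pattern w p k \<longleftrightarrow>
     (\<exists>idx :: nat \<Rightarrow> 'a. strict_mono_on {1..k} idx \<and>
        (\<forall>a\<in>{1..k}. \<forall>b\<in>{1..k}. w (idx a) < w (idx b) \<longleftrightarrow> p a < p b))"

definition avoids_pattern :: "('a::linorder \<Rightarrow> 'b::linorder) \<Rightarrow> (nat \<Rightarrow> nat) \<Rightarrow> nat \<Rightarrow> bool" where
  "avoids_pattern w p k \<longleftrightarrow> \<not> contains_pattern w p k"

definition perm_contains :: "(nat \<Rightarrow> nat) \<Rightarrow> nat \<Rightarrow> (nat \<Rightarrow> nat) \<Rightarrow> nat \<Rightarrow> bool" where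
  "perm_contains q m p k \<longleftrightarrow>
     (\<exists>idx :: nat \<Rightarrow> nat. strict_mono_on {1..k} idx \<and> idx ` {1..k} \<subseteq> {1..m} \<and>
        (\<forall>a\<in>{1..k}. \<forall>b\<in>{1..k}. q (idx a) < q (idx b) \<longleftrightarrow> p a < p b))"

definition pat321 :: "nat \<Rightarrow> nat" where
  "pat321 i = (if i \<in> {1..3} then 4 - i else i)"

definition affine_sym :: "nat \<Rightarrow> (int \<Rightarrow> int) set" where
  "affine_sym n = {w. bij w \<and> (\<forall>i. w (i + int n) = w i + int n)
                    \<and> (\<Sum>i=1..int n. w i) = int ((n + 1) choose 2)}"

end

theory Submission
  imports Defs "HOL-Library.FuncSet"
begin

definition LR :: "(nat \<Rightarrow> nat) \<Rightarrow> nat \<Rightarrow> bool" where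
  "LR p t \<longleftrightarrow> (\<forall>s. 1 \<le> s \<and> s < t \<longrightarrow> p s < p t)"

definition Sb :: "(nat \<Rightarrow> nat) \<Rightarrow> nat \<Rightarrow> nat set" where
  "Sb p t = {x. 1 \<le> x \<and> x < t \<and> LR p x \<and> p x < p t}"

lemma Sb_finite: "finite (Sb p t)"
  by (rule finite_subset[of _ "{..<t}"]) (auto simp: Sb_def)

lemma Sb_Max_in: "Sb p t \<noteq> {} \<Longrightarrow> Max (Sb p t) \<in> Sb p t"
  using Max_in[OF Sb_finite] by blast

lemma Sb_Max_less: "Sb p t \<noteq> {} \<Longrightarrow> Max (Sb p t) < t"
  using Sb_Max_in by (auto simp: Sb_def)

function ff :: "(nat \<Rightarrow> nat) \<Rightarrow> nat \<Rightarrow> int \<Rightarrow> nat \<Rightarrow> int" where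
  "ff p m Q 0 = 0"
| "ff p m Q (Suc t) = (if LR p (Suc t) then ff p m Q t + 2 ^ (m - t)
      else max (ff p m Q t + 1)
        (if Sb p (Suc t) = {} then 0 else ff p m Q (Max (Sb p (Suc t))) + Q + 1))"
  by pat_completeness auto
termination
  apply (relation "measure (\<lambda>(p, m, Q, t). t)")
    apply auto
  using Sb_Max_less by blast

lemma ff_Suc_less: "ff p m Q t < ff p m Q (Suc t)"
  by (auto simp: max_def)

lemma ff_strict_mono: "strict_mono (ff p m Q)"
  unfolding strict_mono_Suc_iff by (intro allI ff_Suc_less)

lemma ff_le: "a \<le> b \<Longrightarrow> ff p m Q a \<le> ff p m Q b"
  using ff_strict_mono strict_mono_less_eq by blast

lemma ff_less: "a < b \<Longrightarrow> ff p m Q a < ff p m Q b"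
  using ff_strict_mono strict_mono_less by blast

lemma ff_nonneg: "0 \<le> ff p m Q a"
  using ff_le[of 0 a p m Q] by simp

lemma L_incr:
  assumes hp: "p permutes {1..m}" and h: "\<not> perm_contains p m pat321 3"
    and y: "1 \<le> y" "y < y'" "y' \<le> m" "\<not> LR p y"
  shows "p y < p y'"
proof (rule ccontr)
  assume nl: "\<not> p y < p y'"
  have inj: "inj p" using hp by (rule permutes_inj)
  obtain s where s: "1 \<le> s" "s < y" "\<not> p s < p y" using y(4) unfolding LR_def by blast
  have "p s \<noteq> p y" using inj s(2) by (metis inj_eq less_irrefl)
  hence ps: "p y < p s" using s(3) by simp
  have "p y \<noteq> p y'" using inj y(2) by (metis inj_eq less_irrefl)
  hence py: "p y' < p y" using nl by simp
  define idx where "idx = (\<lambda>k::nat. if k = 1 then s else if k = 2 then y else y')"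
  have A: "{1..3::nat} = {1,2,3}" by auto
  have "perm_contains p m pat321 3"
    unfolding perm_contains_def
    apply (rule exI[of _ idx])
    unfolding strict_mono_on_def A pat321_def idx_def
    using s y ps py by auto
  with h show False by simp
qed

lemma F2a:
  assumes "LR p x" "\<not> LR p y" "1 \<le> x" "x < y" "p x < p y"
  shows "ff p m Q x + Q + 1 \<le> ff p m Q y"
proof -
  obtain t where t: "y = Suc t" using assms(4) by (cases y) auto
  have xin: "x \<in> Sb p y" using assms by (simp add: Sb_def)
  hence ne: "Sb p y \<noteq> {}" by auto
  have "x \<le> Max (Sb p y)" using Sb_finite xin by (rule Max_ge)
  hence "ff p m Q x \<le> ff p m Q (Max (Sb p y))" by (rule ff_le)
  then show ?thesis using ne assms(2) unfolding t by auto
qed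

lemma F2b:
  assumes hp: "p permutes {1..m}" and h: "\<not> perm_contains p m pat321 3"
    and a: "LR p x" "\<not> LR p y" "1 \<le> x" "x < y" "y \<le> m" "p y < p x" and Qb: "2^m \<le> Q"
  shows "ff p m Q y \<le> ff p m Q x + Q"
proof -
  let ?f = "ff p m Q"
  define T where "T t = (if Sb p t = {} then 0 else ?f (Max (Sb p t)) + Q + 1)" for t
  define M where "M = max (?f x) (T y)"
  have Q0: "0 \<le> Q" using Qb by (smt (verit) zero_le_power)
  have Ty0: "0 \<le> T y" using ff_nonneg Q0 by (simp add: T_def)
  have T_le: "T t \<le> T y" if t: "x < t" "t < y" "\<not> LR p t" for t
  proof -
    have sub: "Sb p t \<subseteq> Sb p y"
    proof
      fix z assume "z \<in> Sb p t"
      moreover have "p t < p y" using L_incr[OF hp h, of t y] t a by simp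
      ultimately show "z \<in> Sb p y" using t by (auto simp: Sb_def)
    qed
    show ?thesis
    proof (cases "Sb p t = {}")
      case True then show ?thesis using Ty0 by (simp add: T_def)
    next
      case False
      hence ne: "Sb p y \<noteq> {}" using sub by auto
      have "Max (Sb p t) \<in> Sb p y" using Sb_Max_in[OF False] sub by auto
      hence "Max (Sb p t) \<le> Max (Sb p y)" using Sb_finite by (rule Max_ge[rotated])
      hence "?f (Max (Sb p t)) \<le> ?f (Max (Sb p y))" by (rule ff_le)
      then show ?thesis using False ne by (simp add: T_def)
    qed
  qed
  have inv: "x + k < y \<Longrightarrow> ?f (x + k) \<le> M + 2^(m+1-x) - 2^(m+1-(x+k))" for k
  proof (induction k)
    case 0
    then show ?case by (simp add: M_def)
  next
    case (Suc k)
    define t where "t = x + k"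
    have tm: "t < m" using Suc.prems a unfolding t_def by simp
    have IH: "?f t \<le> M + 2^(m+1-x) - 2^(m+1-t)" using Suc unfolding t_def by simp
    have p2: "(2::int)^(m+1-t) = 2 * 2^(m-t)" using tm by (simp add: Suc_diff_le)
    have p3: "(2::int)^(m-t) \<le> 2^(m+1-x)" by (rule power_increasing) (auto simp: t_def)
    have p4: "(1::int) \<le> 2^(m-t)" by simp
    have eq: "m + 1 - (x + Suc k) = m - t" unfolding t_def by simp
    have "?f (Suc t) \<le> M + 2^(m+1-x) - 2^(m-t)"
    proof (cases "LR p (Suc t)")
      case True then show ?thesis using IH p2 by simp
    next
      case False
      have "T (Suc t) \<le> T y" using T_le[of "Suc t"] False Suc.prems unfolding t_def by simp
      hence "T (Suc t) \<le> M" unfolding M_def by simp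
      have e: "?f (Suc t) = max (?f t + 1) (T (Suc t))" using False unfolding T_def by simp
      have b1: "?f t + 1 \<le> M + 2^(m+1-x) - 2^(m-t)" using IH p2 p4 by linarith
      have b2: "T (Suc t) \<le> M + 2^(m+1-x) - 2^(m-t)" using \<open>T (Suc t) \<le> M\<close> p3 by linarith
      show ?thesis unfolding e using b1 b2 by simp
    qed
    then show ?case using eq unfolding t_def by simp
  qed
  have "?f (x + (y - 1 - x)) \<le> M + 2^(m+1-x) - 2^(m+1-(x + (y - 1 - x)))"
    by (rule inv) (use a in simp)
  moreover have "x + (y - 1 - x) = y - 1" using a by simp
  ultimately have fy1: "?f (y-1) \<le> M + 2^(m+1-x) - 2^(m+2-y)"
    using a by (simp add: Suc_diff_le)
  have "(2::int)^2 \<le> 2^(m+2-y)" by (rule power_increasing) (use a in auto)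
  hence p4: "(4::int) \<le> 2^(m+2-y)" by simp
  have "(2::int)^(m+1-x) \<le> 2^m" by (rule power_increasing) (use a in auto)
  hence p5: "(2::int)^(m+1-x) \<le> Q" using Qb by linarith
  have fx: "?f x = ?f (x-1) + 2^(m+1-x)"
  proof -
    have "x = Suc (x-1)" using a by simp
    hence "?f x = ?f (x-1) + 2^(m-(x-1))" using a(1) by (metis ff.simps(2))
    moreover have "m - (x-1) = m+1-x" using a by simp
    ultimately show ?thesis by simp
  qed
  have fy: "?f y = max (?f (y-1) + 1) (T y)"
  proof -
    have "y = Suc (y-1)" using a by simp
    then show ?thesis using a(2) unfolding T_def by (metis ff.simps(2))
  qed
  show ?thesis
  proof (cases "Sb p y = {}")
    case True
    hence "T y = 0" by (simp add: T_def)
    then show ?thesis using fy fy1 p4 p5 Q0 ff_nonneg[of p m Q x] unfolding M_def by (simp add: max_def)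
  next
    case False
    define z where "z = Max (Sb p y)"
    have zin: "z \<in> Sb p y" using Sb_Max_in[OF False] z_def by simp
    have "z < x"
    proof (rule ccontr)
      assume "\<not> z < x"
      hence "x < z \<or> x = z" by auto
      then show False
      proof
        assume "x < z" then show False using zin a unfolding Sb_def LR_def by auto
      next
        assume "x = z" then show False using zin a unfolding Sb_def by auto
      qed
    qed
    hence "?f z \<le> ?f (x-1)" by (intro ff_le) simp
    moreover have "T y = ?f z + Q + 1" using False z_def by (simp add: T_def)
    moreover have pos: "(0::int) < 2^(m+1-x)" by simp
    ultimately show ?thesis using fy fy1 p4 p5 fx Q0 unfolding M_def max_def by smt
  qed
qed

lemma per_k:
  assumes "\<forall>z. w (z + int n) = w z + int n"
  shows "w (z + k * int n) = w z + k * int n"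
proof (induction k rule: int_induct[where k=0])
  case base then show ?case by simp
next
  case (step1 i)
  have "w (z + (i + 1) * int n) = w ((z + i * int n) + int n)" by (simp add: algebra_simps)
  also have "\<dots> = w (z + i * int n) + int n" using assms by blast
  finally show ?case using step1 by (simp add: algebra_simps)
next
  case (step2 i)
  have "w (z + i * int n) = w ((z + (i - 1) * int n) + int n)" by (simp add: algebra_simps)
  also have "\<dots> = w (z + (i - 1) * int n) + int n" using assms by blast
  finally show ?case using step2 by (simp add: algebra_simps)
qed

lemma embed:
  assumes hp: "p permutes {1..m}" and h: "\<not> perm_contains p m pat321 3"
    and n: "1 \<le> n" and i: "i \<in> {1..int n}" and j: "j \<in> {1..int n}"
    and per: "\<And>z k. w (z + k * int n) = w z + k * int n"
    and inj: "inj w"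
    and Qd: "Q = (w i - w j - 1) div int n" and Qb: "2^m \<le> Q"
  shows "contains_pattern w p m"
proof -
  let ?f = "ff p m Q"
  let ?n = "int n"
  define c where "c a = (if LR p a then i else j)" for a
  define idx where "idx a = c a + ?f a * ?n" for a
  have npos: "0 < ?n" using n by simp
  define D where "D = w i - w j"
  have dm: "D - 1 = Q * ?n + (D - 1) mod ?n" unfolding Qd D_def by simp
  have r0: "0 \<le> (D - 1) mod ?n" and r1: "(D - 1) mod ?n < ?n" using npos by simp_all
  have Q1: "1 \<le> Q" using Qb by (smt (verit) one_le_power)
  have "?n \<le> Q * ?n" using Q1 npos by simp
  hence Dpos: "0 < D" using dm r0 by linarith
  have cr: "1 \<le> c a \<and> c a \<le> ?n" for a using i j by (simp add: c_def)
  have wi: "w (idx a) = w (c a) + ?f a * ?n" for a unfolding idx_def by (rule per)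
  have smono: "idx a < idx b" if "a < b" for a b
  proof -
    have "?f a + 1 \<le> ?f b" using ff_less[OF that, of p m Q] by simp
    hence "(?f a + 1) * ?n \<le> ?f b * ?n" using npos by (intro mult_right_mono) auto
    thus ?thesis using cr[of a] cr[of b] unfolding idx_def by (simp add: algebra_simps)
  qed
  have ineq: "idx a \<noteq> idx b" if "a \<noteq> b" for a b
    using smono[of a b] smono[of b a] that by linarith
  have key: "w (idx a) < w (idx b)" if ab: "a \<in> {1..m}" "b \<in> {1..m}" "p a < p b" for a b
  proof -
    have anb: "a \<noteq> b" using ab by auto
    show ?thesis
    proof (cases "LR p a")
      case La: True
      show ?thesis
      proof (cases "LR p b")
        case True
        have "a < b"
        proof (rule ccontr)
          assume "\<not> a < b"
          hence "b < a" using anb by simp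
          hence "p b < p a" using La ab unfolding LR_def by auto
          thus False using ab by simp
        qed
        hence "?f a * ?n < ?f b * ?n" using ff_less npos by simp
        thus ?thesis using La True by (simp add: wi c_def)
      next
        case Lb: False
        have "a < b"
        proof (rule ccontr)
          assume "\<not> a < b"
          hence "b < a" using anb by simp
          hence "p b < p a" using La ab unfolding LR_def by auto
          thus False using ab by simp
        qed
        hence "?f a + Q + 1 \<le> ?f b" using F2a[of p a b m Q] La Lb ab by simp
        hence "(Q + 1) * ?n \<le> (?f b - ?f a) * ?n" using npos by (intro mult_right_mono) auto
        hence "w (idx a) \<le> w (idx b)" using La Lb dm r1 unfolding wi c_def D_def
          by (simp add: algebra_simps)
        moreover have "w (idx a) \<noteq> w (idx b)" using inj ineq[OF anb] by (metis injD)
        ultimately show ?thesis by simp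
      qed
    next
      case La: False
      show ?thesis
      proof (cases "LR p b")
        case Lb: True
        show ?thesis
        proof (cases "a < b")
          case True
          hence "?f a * ?n < ?f b * ?n" using ff_less npos by simp
          thus ?thesis using La Lb Dpos unfolding wi c_def D_def by simp
        next
          case False
          hence ba: "b < a" using anb by simp
          have "?f a \<le> ?f b + Q" using F2b[OF hp h Lb La _ ba _ _ Qb] ab by simp
          hence "(?f a - ?f b) * ?n \<le> Q * ?n" using npos by (intro mult_right_mono) auto
          thus ?thesis using La Lb dm r0 unfolding wi c_def D_def by (simp add: algebra_simps)
        qed
      next
        case Lb: False
        have "a < b"
        proof (rule ccontr)
          assume "\<not> a < b"
          hence "b < a" using anb by simp
          hence "p b < p a" using L_incr[OF hp h, of b a] Lb ab by simp
          thus False using ab by simp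
        qed
        hence "?f a * ?n < ?f b * ?n" using ff_less npos by simp
        thus ?thesis using La Lb by (simp add: wi c_def)
      qed
    qed
  qed
  have injp: "inj p" using hp by (rule permutes_inj)
  show ?thesis
    unfolding contains_pattern_def
  proof (intro exI[of _ idx] conjI ballI)
    show "strict_mono_on {1..m} idx" unfolding strict_mono_on_def using smono by blast
  next
    fix a b assume ab: "a \<in> {1..m}" "b \<in> {1..m}"
    show "w (idx a) < w (idx b) \<longleftrightarrow> p a < p b"
    proof
      assume wl: "w (idx a) < w (idx b)"
      show "p a < p b"
      proof (rule ccontr)
        assume "\<not> p a < p b"
        hence "p b < p a \<or> p a = p b" by auto
        thus False
        proof
          assume "p b < p a" thus False using key[of b a] ab wl by simp
        next
          assume "p a = p b" hence "a = b" using injp by (simp add: inj_eq)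
          thus False using wl by simp
        qed
      qed
    next
      assume "p a < p b" thus "w (idx a) < w (idx b)" using key ab by blast
    qed
  qed
qed

lemma sum_id_int: "(\<Sum>t=1..int n. t) = int ((n + 1) choose 2)"
proof (induction n)
  case 0 then show ?case by simp
next
  case (Suc n)
  have "{1..int (Suc n)} = insert (int n + 1) {1..int n}" by auto
  hence "(\<Sum>t=1..int (Suc n). t) = (int n + 1) + (\<Sum>t=1..int n. t)" by simp
  also have "\<dots> = int ((Suc n + 1) choose 2)" using Suc by (simp add: numeral_2_eq_2)
  finally show ?case .
qed

lemma affine_props:
  assumes "w \<in> affine_sym n"
  shows "inj w" "\<And>z k. w (z + k * int n) = w z + k * int n"
    "(\<Sum>t=1..int n. w t - t) = 0"
proof -
  have a: "bij w" "\<forall>i. w (i + int n) = w i + int n" "(\<Sum>i=1..int n. w i) = int ((n + 1) choose 2)"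
    using assms by (auto simp: affine_sym_def)
  show "inj w" using a(1) by (rule bij_is_inj)
  show "\<And>z k. w (z + k * int n) = w z + k * int n" using per_k[OF a(2)] by blast
  show "(\<Sum>t=1..int n. w t - t) = 0" using a(3) sum_id_int[of n] by (simp add: sum_subtractf)
qed

lemma fin_bounded:
  assumes n: "1 \<le> n"
  shows "finite {w \<in> affine_sym n. \<forall>t\<in>{1..int n}. \<bar>w t - t\<bar> \<le> B}"
proof -
  let ?S = "{w \<in> affine_sym n. \<forall>t\<in>{1..int n}. \<bar>w t - t\<bar> \<le> B}"
  let ?R = "\<lambda>w. restrict w {1..int n}"
  have npos: "0 < int n" using n by simp
  have "inj_on ?R ?S"
  proof (rule inj_onI)
    fix w w' assume ws: "w \<in> ?S" "w' \<in> ?S" and eq: "?R w = ?R w'"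
    have agree: "w t = w' t" if "t \<in> {1..int n}" for t
      using fun_cong[OF eq, of t] that by simp
    show "w = w'"
    proof
      fix z
      define r where "r = (z - 1) mod int n + 1"
      define k where "k = (z - 1) div int n"
      have zr: "z = r + k * int n" unfolding r_def k_def by (metis add.commute add_diff_cancel_left' diff_add_cancel div_mult_mod_eq add.assoc)
      have "r \<in> {1..int n}" unfolding r_def using npos by (simp add: pos_mod_bound pos_mod_sign add1_zle_eq)
      hence "w r = w' r" by (rule agree)
      moreover have "w (r + k * int n) = w r + k * int n" using affine_props(2) ws(1) by blast
      moreover have "w' (r + k * int n) = w' r + k * int n" using affine_props(2) ws(2) by blast
      ultimately show "w z = w' z" unfolding zr by simp
    qed
  qed
  moreover have "?R ` ?S \<subseteq> Pi\<^sub>E {1..int n} (\<lambda>_. {1 - B..int n + B})"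
    by (auto simp: restrict_PiE_iff abs_le_iff)
  moreover have "finite (Pi\<^sub>E {1..int n} (\<lambda>_. {1 - B..int n + B}))"
    by (rule finite_PiE) auto
  ultimately show ?thesis using finite_imageD finite_subset by blast
qed

lemma big_contains:
  assumes hp: "p permutes {1..m}" and h: "\<not> perm_contains p m pat321 3"
    and n: "1 \<le> n" and w: "w \<in> affine_sym n" and t0: "t0 \<in> {1..int n}"
    and big: "\<bar>w t0 - t0\<bar> > 2^m * int n + int n"
  shows "contains_pattern w p m"
proof -
  have s0: "(\<Sum>t=1..int n. w t - t) = 0" by (rule affine_props(3)[OF w])
  have ne: "{1..int n} \<noteq> {}" using n by simp
  obtain i j where ij: "i \<in> {1..int n}" "j \<in> {1..int n}" "w i - w j \<ge> 2^m * int n + 2"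
  proof (cases "w t0 - t0 > 0")
    case True
    have "\<exists>j\<in>{1..int n}. w j - j \<le> 0"
    proof (rule ccontr)
      assume "\<not> ?thesis"
      hence "\<forall>j\<in>{1..int n}. 0 < w j - j" by auto
      hence "0 < (\<Sum>t=1..int n. w t - t)" using ne by (intro sum_pos) auto
      thus False using s0 by simp
    qed
    then obtain j where j: "j \<in> {1..int n}" "w j - j \<le> 0" by blast
    have "w t0 - w j \<ge> 2^m * int n + 2" using True big j t0 by auto
    thus ?thesis using that t0 j by blast
  next
    case False
    have "\<exists>i\<in>{1..int n}. w i - i \<ge> 0"
    proof (rule ccontr)
      assume "\<not> ?thesis"
      hence "\<forall>j\<in>{1..int n}. w j - j < 0" by auto
      hence "(\<Sum>t=1..int n. w t - t) < 0" using ne sum_strict_mono[of "{1..int n}" "\<lambda>t. w t - t" "\<lambda>_. 0"] by auto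
      thus False using s0 by simp
    qed
    then obtain i where i: "i \<in> {1..int n}" "w i - i \<ge> 0" by blast
    have "w i - w t0 \<ge> 2^m * int n + 2" using False big i t0 by auto
    thus ?thesis using that t0 i by blast
  qed
  have npos: "0 < int n" using n by simp
  have "(2^m * int n) div int n \<le> (w i - w j - 1) div int n"
    using ij(3) npos by (intro zdiv_mono1) auto
  hence Qb: "2^m \<le> (w i - w j - 1) div int n" using npos by simp
  show ?thesis
    by (rule embed[OF hp h n ij(1,2) affine_props(2)[OF w] affine_props(1)[OF w] refl Qb])
qed

theorem proposition3p3:
  fixes p :: "nat \<Rightarrow> nat" and m n :: nat
  assumes "p permutes {1..m}"
    and "\<not> perm_contains p m pat321 3"
    and "n \<ge> 2"
  shows "finite {w \<in> affine_sym n. avoids_pattern w p m}"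
proof -
  have n: "1 \<le> n" using assms(3) by simp
  let ?B = "2^m * int n + int n"
  have "{w \<in> affine_sym n. avoids_pattern w p m} \<subseteq> {w \<in> affine_sym n. \<forall>t\<in>{1..int n}. \<bar>w t - t\<bar> \<le> ?B}"
  proof
    fix w assume "w \<in> {w \<in> affine_sym n. avoids_pattern w p m}"
    hence w: "w \<in> affine_sym n" and av: "avoids_pattern w p m" by auto
    have "\<forall>t\<in>{1..int n}. \<bar>w t - t\<bar> \<le> ?B"
    proof (rule ccontr)
      assume "\<not> ?thesis"
      then obtain t0 where "t0 \<in> {1..int n}" "\<bar>w t0 - t0\<bar> > ?B" by auto
      hence "contains_pattern w p m" using big_contains[OF assms(1,2) n w] by blast
      thus False using av by (simp add: avoids_pattern_def)
    qed
    thus "w \<in> {w \<in> affine_sym n. \<forall>t\<in>{1..int n}. \<bar>w t - t\<bar> \<le> ?B}" using w by simp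
  qed
  thus ?thesis using fin_bounded[OF n] finite_subset by blast
qed

end
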